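(* For the hypergeometric weights described in the context, with $\phi:=(\vartheta S)S^{-1}$, $T_{-}:=(\Lambda^\top)^2\gamma+\Lambda^\top\beta$ and $T_{+}:=T-T_-=\alpha+\Lambda$, the Lax equation holds: \[ \vartheta T=[\phi,T]=[T_{+},T]. \]
   Context: Weights on $\mathbb N_0$: $w^{(a)}(k)=\frac{(b^{(a)}_1)_k\cdots(b^{(a)}_{M^{(a)}})_k}{(c_1)_k\cdots(c_N)_k}\frac{(\eta^{(a)})^k}{k!}$, $a\in\{1,2\}$, convergent series. Moment matrix (indices from 0): $\mathscr M_{n,2m}=\sum_k k^{n+m}w^{(1)}(k)$, $\mathscr M_{n,2m+1}=\sum_k k^{n+m}w^{(2)}(k)$, with all leading principal minors nonzero, so $\mathscr M=S^{-1}H\tilde S^{-\top}$ ($S,\tilde S$ lower unitriangular, $H$ diagonal), depending on $(\eta^{(1)},\eta^{(2)})$. $\Lambda$ has ones on the first superdiagonal; $T=S\Lambda S^{-1}=(\Lambda^\top)^2\gamma+\Lambda^\top\beta+\alpha+\Lambda$ with diagonal $\alpha,\beta,\gamma$. $\vartheta=\eta^{(1)}\partial/\partial\eta^{(1)}+\eta^{(2)}\partial/\partial\eta^{(2)}$; $[X,Y]=XY-YX$. *)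

theory Defs
  imports Complex_Main "HOL-Analysis.Derivative" "Jordan_Normal_Form.Determinant"
begin

text \<open>Semi-infinite matrices indexed from 0 are functions nat => nat => real.
The product is the (entrywise) series; in every product used below each
series has only finitely many nonzero terms.\<close>

type_synonym imat = "nat \<Rightarrow> nat \<Rightarrow> real"

definition mmul :: "imat \<Rightarrow> imat \<Rightarrow> imat" where
  "mmul A B = (\<lambda>i j. \<Sum>k. A i k * B k j)"

definition madd :: "imat \<Rightarrow> imat \<Rightarrow> imat" where
  "madd A B = (\<lambda>i j. A i j + B i j)"

definition msub :: "imat \<Rightarrow> imat \<Rightarrow> imat" where
  "msub A B = (\<lambda>i j. A i j - B i j)"

definition mtr :: "imat \<Rightarrow> imat" where
  "mtr A = (\<lambda>i j. A j i)"

definition idm :: imat where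
  "idm = (\<lambda>i j. if i = j then 1 else 0)"

definition Lam :: imat where
  "Lam = (\<lambda>i j. if j = Suc i then 1 else 0)"

definition comm :: "imat \<Rightarrow> imat \<Rightarrow> imat" where
  "comm X Y = msub (mmul X Y) (mmul Y X)"

definition lower_unitri :: "imat \<Rightarrow> bool" where
  "lower_unitri A \<longleftrightarrow> (\<forall>i j. i < j \<longrightarrow> A i j = 0) \<and> (\<forall>i. A i i = 1)"

definition diagonal_m :: "imat \<Rightarrow> bool" where
  "diagonal_m A \<longleftrightarrow> (\<forall>i j. i \<noteq> j \<longrightarrow> A i j = 0)"

definition linv :: "imat \<Rightarrow> imat" where
  "linv A = (THE L. lower_unitri L \<and> mmul A L = idm)"

definition hweight :: "real list \<Rightarrow> real list \<Rightarrow> real \<Rightarrow> nat \<Rightarrow> real" where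
  "hweight bs cs eta k =
     (\<Prod>b\<leftarrow>bs. pochhammer b k) / (\<Prod>c\<leftarrow>cs. pochhammer c k) * eta ^ k / fact k"

definition moment :: "real list \<Rightarrow> real list \<Rightarrow> real list \<Rightarrow> real \<times> real \<Rightarrow> imat" where
  "moment bs1 bs2 cs eta = (\<lambda>n m.
     if even m then (\<Sum>k. real k ^ (n + m div 2) * hweight bs1 cs (fst eta) k)
     else (\<Sum>k. real k ^ (n + m div 2) * hweight bs2 cs (snd eta) k))"

definition lead_block :: "imat \<Rightarrow> nat \<Rightarrow> real mat" where
  "lead_block A n = mat n n (\<lambda>(i, j). A i j)"

definition theta :: "(real \<times> real \<Rightarrow> real) \<Rightarrow> real \<times> real \<Rightarrow> real" where
  "theta F eta = fst eta * deriv (\<lambda>x. F (x, snd eta)) (fst eta)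
               + snd eta * deriv (\<lambda>y. F (fst eta, y)) (snd eta)"

definition thetaM :: "(real \<times> real \<Rightarrow> imat) \<Rightarrow> real \<times> real \<Rightarrow> imat" where
  "thetaM A eta = (\<lambda>i j. theta (\<lambda>e. A e i j) eta)"

text \<open>T_- = (Lambda^T)^2 gamma + Lambda^T beta: the first two subdiagonals of T.\<close>
definition Tminus :: "imat \<Rightarrow> imat" where
  "Tminus T = (\<lambda>i j. if i = Suc j \<or> i = Suc (Suc j) then T i j else 0)"

definition Tplus :: "imat \<Rightarrow> imat" where
  "Tplus T = msub T (Tminus T)"

end

theory Submission
  imports Defs
begin
definition okf :: "(real \<times> real \<Rightarrow> real) \<Rightarrow> real \<times> real \<Rightarrow> bool" where
  "okf F e \<longleftrightarrow> (\<lambda>x. F (x, snd e)) differentiable (at (fst e)) \<and> (\<lambda>y. F (fst e, y)) differentiable (at (snd e))"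

lemma deriv_mult_r:
  fixes f g :: "real \<Rightarrow> real"
  assumes "f differentiable at x" "g differentiable at x"
  shows "deriv (\<lambda>t. f t * g t) x = deriv f x * g x + f x * deriv g x"
proof -
  have "DERIV f x :> deriv f x" "DERIV g x :> deriv g x"
    using assms DERIV_deriv_iff_real_differentiable by blast+
  from DERIV_mult[OF this] show ?thesis by (intro DERIV_imp_deriv) (simp add: algebra_simps)
qed

lemma deriv_add_r:
  fixes f g :: "real \<Rightarrow> real"
  assumes "f differentiable at x" "g differentiable at x"
  shows "deriv (\<lambda>t. f t + g t) x = deriv f x + deriv g x"
proof -
  have "DERIV f x :> deriv f x" "DERIV g x :> deriv g x"
    using assms DERIV_deriv_iff_real_differentiable by blast+
  from DERIV_add[OF this] show ?thesis by (intro DERIV_imp_deriv) simp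
qed

lemma deriv_diff_r:
  fixes f g :: "real \<Rightarrow> real"
  assumes "f differentiable at x" "g differentiable at x"
  shows "deriv (\<lambda>t. f t - g t) x = deriv f x - deriv g x"
proof -
  have "DERIV f x :> deriv f x" "DERIV g x :> deriv g x"
    using assms DERIV_deriv_iff_real_differentiable by blast+
  from DERIV_diff[OF this] show ?thesis by (intro DERIV_imp_deriv) simp
qed

lemma deriv_sum_r:
  fixes f :: "'a \<Rightarrow> real \<Rightarrow> real"
  assumes "finite A" "\<And>a. a \<in> A \<Longrightarrow> f a differentiable at x"
  shows "deriv (\<lambda>t. \<Sum>a\<in>A. f a t) x = (\<Sum>a\<in>A. deriv (f a) x)"
  using assms
proof (induction A rule: finite_induct)
  case empty then show ?case by simp
next
  case (insert a A)
  have "deriv (\<lambda>t. \<Sum>a\<in>insert a A. f a t) x = deriv (\<lambda>t. f a t + (\<Sum>a\<in>A. f a t)) x"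
    using insert by simp
  also have "\<dots> = deriv (f a) x + deriv (\<lambda>t. \<Sum>a\<in>A. f a t) x"
    using insert by (intro deriv_add_r) auto
  finally show ?case using insert by simp
qed

lemma deriv_const_r: "deriv (\<lambda>t::real. c::real) x = 0"
  by (intro DERIV_imp_deriv) simp

lemma okf_const[simp]: "okf (\<lambda>p. c) e"
  by (simp add: okf_def)

lemma okf_add: "okf F e \<Longrightarrow> okf G e \<Longrightarrow> okf (\<lambda>p. F p + G p) e"
  by (simp add: okf_def)
lemma okf_diff: "okf F e \<Longrightarrow> okf G e \<Longrightarrow> okf (\<lambda>p. F p - G p) e"
  by (simp add: okf_def)
lemma okf_mult: "okf F e \<Longrightarrow> okf G e \<Longrightarrow> okf (\<lambda>p. F p * G p) e"
  by (simp add: okf_def)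
lemma okf_uminus: "okf F e \<Longrightarrow> okf (\<lambda>p. - F p) e"
  by (simp add: okf_def)
lemma okf_divide: "okf F e \<Longrightarrow> okf G e \<Longrightarrow> G e \<noteq> 0 \<Longrightarrow> okf (\<lambda>p. F p / G p) e"
  by (cases e) (simp add: okf_def)
lemma okf_sum: "finite A \<Longrightarrow> (\<And>a. a \<in> A \<Longrightarrow> okf (F a) e) \<Longrightarrow> okf (\<lambda>p. \<Sum>a\<in>A. F a p) e"
  by (simp add: okf_def)
lemma okf_prod: "finite A \<Longrightarrow> (\<And>a. a \<in> A \<Longrightarrow> okf (F a) e) \<Longrightarrow> okf (\<lambda>p. \<Prod>a\<in>A. F a p) e"
proof (induction A rule: finite_induct)
  case empty then show ?case by simp
next
  case (insert a A)
  then have "okf (\<lambda>p. F a p * (\<Prod>a\<in>A. F a p)) e" by (intro okf_mult) auto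
  then show ?case using insert by simp
qed

lemma theta_add: "okf F e \<Longrightarrow> okf G e \<Longrightarrow> theta (\<lambda>p. F p + G p) e = theta F e + theta G e"
  unfolding okf_def theta_def by (simp add: deriv_add_r algebra_simps)
lemma theta_diff: "okf F e \<Longrightarrow> okf G e \<Longrightarrow> theta (\<lambda>p. F p - G p) e = theta F e - theta G e"
  unfolding okf_def theta_def by (simp add: deriv_diff_r algebra_simps)
lemma theta_mult: "okf F e \<Longrightarrow> okf G e \<Longrightarrow> theta (\<lambda>p. F p * G p) e = theta F e * G e + F e * theta G e"
  unfolding okf_def theta_def by (cases e) (simp add: deriv_mult_r algebra_simps)
lemma theta_const: "theta (\<lambda>p. c) e = 0"
  unfolding theta_def by (simp add: deriv_const_r)
lemma theta_sum: "finite A \<Longrightarrow> (\<And>a. a \<in> A \<Longrightarrow> okf (F a) e) \<Longrightarrow> theta (\<lambda>p. \<Sum>a\<in>A. F a p) e = (\<Sum>a\<in>A. theta (F a) e)"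
  unfolding okf_def theta_def by (simp add: deriv_sum_r sum.distrib sum_distrib_left)

lemma line_ev1:
  fixes e :: "real \<times> real"
  assumes "open U" "e \<in> U"
  shows "eventually (\<lambda>x. (x, snd e) \<in> U) (nhds (fst e))"
proof -
  obtain r where r: "r > 0" "ball e r \<subseteq> U" using assms open_contains_ball by blast
  show ?thesis unfolding eventually_nhds_metric
  proof (intro exI[of _ r] conjI allI impI)
    fix x assume "dist x (fst e) < r"
    then have "dist (x, snd e) e < r" by (cases e) (simp add: dist_Pair_Pair)
    then show "(x, snd e) \<in> U" using r by (auto simp: dist_commute)
  qed (use r in auto)
qed

lemma line_ev2:
  fixes e :: "real \<times> real"
  assumes "open U" "e \<in> U"
  shows "eventually (\<lambda>y. (fst e, y) \<in> U) (nhds (snd e))"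
proof -
  obtain r where r: "r > 0" "ball e r \<subseteq> U" using assms open_contains_ball by blast
  show ?thesis unfolding eventually_nhds_metric
  proof (intro exI[of _ r] conjI allI impI)
    fix x assume "dist x (snd e) < r"
    then have "dist (fst e, x) e < r" by (cases e) (simp add: dist_Pair_Pair)
    then show "(fst e, x) \<in> U" using r by (auto simp: dist_commute)
  qed (use r in auto)
qed

lemma diff_cong_ev:
  fixes f g :: "real \<Rightarrow> real"
  assumes "eventually (\<lambda>x. f x = g x) (nhds x)"
  shows "f differentiable at x \<longleftrightarrow> g differentiable at x"
proof -
  have "DERIV f x :> deriv f x \<longleftrightarrow> DERIV g x :> deriv g x"
    using deriv_cong_ev[OF assms refl] by (intro DERIV_cong_ev[OF refl assms]) simp
  then show ?thesis using DERIV_deriv_iff_real_differentiable by blast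
qed

lemma theta_cong:
  fixes e :: "real \<times> real"
  assumes "open U" "e \<in> U" "\<And>p. p \<in> U \<Longrightarrow> F p = G p"
  shows "theta F e = theta G e \<and> (okf F e \<longleftrightarrow> okf G e)"
proof -
  have 1: "eventually (\<lambda>x. F (x, snd e) = G (x, snd e)) (nhds (fst e))"
    using line_ev1[OF assms(1,2)] by eventually_elim (use assms(3) in auto)
  have 2: "eventually (\<lambda>y. F (fst e, y) = G (fst e, y)) (nhds (snd e))"
    using line_ev2[OF assms(1,2)] by eventually_elim (use assms(3) in auto)
  show ?thesis unfolding theta_def okf_def
    using deriv_cong_ev[OF 1 refl] deriv_cong_ev[OF 2 refl] diff_cong_ev[OF 1] diff_cong_ev[OF 2]
    by simp
qed

lemma theta_constU:
  fixes e :: "real \<times> real"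
  assumes "open U" "e \<in> U" "\<And>p. p \<in> U \<Longrightarrow> F p = c"
  shows "theta F e = 0" "okf F e"
  using theta_cong[OF assms(1,2), of F "\<lambda>p. c"] assms(3) theta_const by auto

definition rowb :: "imat \<Rightarrow> (nat \<Rightarrow> nat) \<Rightarrow> bool" where
  "rowb A N \<longleftrightarrow> (\<forall>i k. N i \<le> k \<longrightarrow> A i k = 0)"

definition rowfin :: "imat \<Rightarrow> bool" where
  "rowfin A \<longleftrightarrow> (\<exists>N. rowb A N)"

lemma mmul_fin:
  assumes "\<And>k. N \<le> k \<Longrightarrow> A i k = 0"
  shows "mmul A B i j = (\<Sum>k<N. A i k * B k j)"
  unfolding mmul_def using assms by (intro suminf_finite) auto

lemma mmul_finb: "rowb A N \<Longrightarrow> mmul A B i j = (\<Sum>k<N i. A i k * B k j)"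
  by (rule mmul_fin) (auto simp: rowb_def)

lemma rowb_mmul:
  assumes "rowb A NA" "rowb B NB"
  shows "rowb (mmul A B) (\<lambda>i. \<Sum>k<NA i. NB k)"
  unfolding rowb_def
proof (intro allI impI)
  fix i l assume l: "(\<Sum>k<NA i. NB k) \<le> l"
  have "mmul A B i l = (\<Sum>k<NA i. A i k * B k l)" by (rule mmul_finb[OF assms(1)])
  also have "\<dots> = 0"
  proof (intro sum.neutral ballI)
    fix k assume "k \<in> {..<NA i}"
    then have "NB k \<le> (\<Sum>k<NA i. NB k)" by (intro member_le_sum) auto
    then have "B k l = 0" using assms(2) l unfolding rowb_def by auto
    then show "A i k * B k l = 0" by simp
  qed
  finally show "mmul A B i l = 0" .
qed

lemma rowfin_mmul: "rowfin A \<Longrightarrow> rowfin B \<Longrightarrow> rowfin (mmul A B)"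
  unfolding rowfin_def using rowb_mmul by blast

lemma mmul_assoc:
  assumes "rowfin A" "rowfin B"
  shows "mmul (mmul A B) C = mmul A (mmul B C)"
proof (intro ext)
  fix i j
  obtain NA NB where a: "rowb A NA" and b: "rowb B NB" using assms rowfin_def by blast
  define K where "K = (\<Sum>k<NA i. NB k)"
  have "mmul (mmul A B) C i j = (\<Sum>l<K. mmul A B i l * C l j)"
    using rowb_mmul[OF a b] unfolding K_def by (rule mmul_finb)
  also have "\<dots> = (\<Sum>l<K. (\<Sum>k<NA i. A i k * B k l) * C l j)"
    by (simp add: mmul_finb[OF a])
  also have "\<dots> = (\<Sum>k<NA i. A i k * (\<Sum>l<K. B k l * C l j))"
    by (simp add: sum_distrib_left sum_distrib_right mult.assoc sum.swap[of _ "{..<K}"])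
  also have "\<dots> = (\<Sum>k<NA i. A i k * mmul B C k j)"
  proof (intro sum.cong refl)
    fix k assume "k \<in> {..<NA i}"
    then have "NB k \<le> K" unfolding K_def by (intro member_le_sum) auto
    then have "mmul B C k j = (\<Sum>l<K. B k l * C l j)"
      using b by (intro mmul_fin) (auto simp: rowb_def)
    then show "A i k * (\<Sum>l<K. B k l * C l j) = A i k * mmul B C k j" by simp
  qed
  also have "\<dots> = mmul A (mmul B C) i j" by (simp add: mmul_finb[OF a])
  finally show "mmul (mmul A B) C i j = mmul A (mmul B C) i j" .
qed

lemma rowb_lower: "lower_unitri A \<Longrightarrow> rowb A Suc"
  unfolding rowb_def lower_unitri_def by auto

lemma rowfin_lower: "lower_unitri A \<Longrightarrow> rowfin A"
  using rowb_lower rowfin_def by blast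

lemma rowb_Lam: "rowb Lam (\<lambda>i. Suc (Suc i))"
  unfolding rowb_def Lam_def by auto

lemma rowfin_Lam: "rowfin Lam"
  using rowb_Lam rowfin_def by blast

lemma rowb_idm: "rowb idm Suc"
  unfolding rowb_def idm_def by auto

lemma mmul_idm_left[simp]: "mmul idm A = A"
proof (intro ext)
  fix i j
  have "mmul idm A i j = (\<Sum>k<Suc i. idm i k * A k j)" by (rule mmul_finb[OF rowb_idm])
  also have "\<dots> = A i j" by (simp add: idm_def)
  finally show "mmul idm A i j = A i j" .
qed

lemma mmul_idm_right[simp]: "mmul A idm = A"
proof (intro ext)
  fix i j
  have "mmul A idm i j = (\<Sum>k\<in>{j}. A i k * idm k j)"
    unfolding mmul_def by (intro suminf_finite) (auto simp: idm_def)
  then show "mmul A idm i j = A i j" by (simp add: idm_def)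
qed

lemma Lam_mmul: "mmul Lam A i j = A (Suc i) j"
proof -
  have "mmul Lam A i j = (\<Sum>k\<in>{Suc i}. Lam i k * A k j)"
    unfolding mmul_def by (intro suminf_finite) (auto simp: Lam_def)
  then show ?thesis by (simp add: Lam_def)
qed

lemma mmul_Lam: "mmul A Lam i j = (if j = 0 then 0 else A i (j - 1))"
proof (cases j)
  case 0
  then show ?thesis unfolding mmul_def Lam_def by simp
next
  case (Suc j')
  have "mmul A Lam i j = (\<Sum>k\<in>{j'}. A i k * Lam k j)"
    unfolding mmul_def by (intro suminf_finite) (auto simp: Lam_def Suc)
  then show ?thesis by (simp add: Lam_def Suc)
qed

fun lvc :: "imat \<Rightarrow> nat \<Rightarrow> nat \<Rightarrow> real" where
  "lvc A j i = (if i < j then 0 else if i = j then 1 else - (\<Sum>k\<in>{..<i}. A i k * lvc A j k))"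

declare lvc.simps[simp del]

definition lv :: "imat \<Rightarrow> imat" where "lv A = (\<lambda>i j. lvc A j i)"

lemma lv_lower: "lower_unitri (lv A)"
  unfolding lower_unitri_def lv_def by (auto simp: lvc.simps)

lemma mmul_lower_row:
  assumes "lower_unitri A"
  shows "mmul A B i j = B i j + (\<Sum>k<i. A i k * B k j)"
proof -
  have "mmul A B i j = (\<Sum>k<Suc i. A i k * B k j)" by (rule mmul_finb[OF rowb_lower[OF assms]])
  also have "\<dots> = B i j + (\<Sum>k<i. A i k * B k j)"
    using assms by (simp add: lower_unitri_def)
  finally show ?thesis .
qed

lemma lv_inv:
  assumes "lower_unitri A"
  shows "mmul A (lv A) = idm"
proof (intro ext)
  fix i j
  have m: "mmul A (lv A) i j = lvc A j i + (\<Sum>k<i. A i k * lvc A j k)"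
    using mmul_lower_row[OF assms] by (simp add: lv_def)
  consider "i < j" | "i = j" | "i > j" by linarith
  then show "mmul A (lv A) i j = idm i j"
  proof cases
    case 1
    then show ?thesis using m by (simp add: lvc.simps[of A j] idm_def)
  next
    case 2
    then show ?thesis using m by (simp add: lvc.simps[of A j] idm_def)
  next
    case 3
    then show ?thesis using m lvc.simps[of A j i] by (simp add: idm_def)
  qed
qed

lemma lower_left_cancel:
  assumes "lower_unitri A" "mmul A L1 = mmul A L2"
  shows "L1 = L2"
proof (intro ext)
  fix i j
  show "L1 i j = L2 i j"
  proof (induction i rule: less_induct)
    case (less i)
    have "mmul A L1 i j = mmul A L2 i j" using assms(2) by simp
    then have "L1 i j + (\<Sum>k<i. A i k * L1 k j) = L2 i j + (\<Sum>k<i. A i k * L2 k j)"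
      using mmul_lower_row[OF assms(1)] by simp
    moreover have "(\<Sum>k<i. A i k * L1 k j) = (\<Sum>k<i. A i k * L2 k j)"
      using less by (intro sum.cong) auto
    ultimately show ?case by simp
  qed
qed

lemma linv_eq:
  assumes "lower_unitri A"
  shows "linv A = lv A"
  unfolding linv_def
proof (rule the_equality)
  show "lower_unitri (lv A) \<and> mmul A (lv A) = idm" using lv_lower lv_inv assms by blast
next
  fix L assume "lower_unitri L \<and> mmul A L = idm"
  then show "L = lv A" using lower_left_cancel[OF assms] lv_inv[OF assms] by simp
qed

lemma linv_lower: "lower_unitri A \<Longrightarrow> lower_unitri (linv A)"
  using linv_eq lv_lower by simp

lemma linv_right: "lower_unitri A \<Longrightarrow> mmul A (linv A) = idm"
  using linv_eq lv_inv by simp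

lemma linv_left:
  assumes "lower_unitri A"
  shows "mmul (linv A) A = idm"
proof -
  let ?L = "linv A"
  have L: "lower_unitri ?L" using linv_lower[OF assms] .
  have "A = mmul A (mmul ?L (linv ?L))" using linv_right[OF L] by simp
  also have "\<dots> = mmul (mmul A ?L) (linv ?L)"
    using mmul_assoc rowfin_lower assms L by metis
  also have "\<dots> = linv ?L" using linv_right[OF assms] by simp
  finally have "A = linv ?L" .
  then show ?thesis using linv_right[OF L] by simp
qed

definition hc :: "real list \<Rightarrow> real list \<Rightarrow> nat \<Rightarrow> real" where
  "hc bs cs k = (\<Prod>b\<leftarrow>bs. pochhammer b k) / (\<Prod>c\<leftarrow>cs. pochhammer c k) / fact k"

lemma hweight_hc: "real k ^ p * hweight bs cs x k = (real k ^ p * hc bs cs k) * x ^ k"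
  unfolding hweight_def hc_def by simp

lemma ps_theta:
  fixes a :: "nat \<Rightarrow> real"
  assumes d: "d > 0" and sm: "\<And>x q. \<bar>x - x0\<bar> < d \<Longrightarrow> summable (\<lambda>k. (real k ^ q * a k) * x ^ k)"
  shows "(\<lambda>x. \<Sum>k. (real k ^ p * a k) * x ^ k) differentiable at x0
     \<and> x0 * deriv (\<lambda>x. \<Sum>k. (real k ^ p * a k) * x ^ k) x0 = (\<Sum>k. (real k ^ Suc p * a k) * x0 ^ k)"
proof -
  define c where "c k = real k ^ p * a k" for k
  define K where "K = (if x0 \<ge> 0 then x0 + d/2 else x0 - d/2)"
  have K1: "\<bar>K - x0\<bar> < d" and K2: "norm x0 < norm K" using d by (auto simp: K_def)
  have smK: "summable (\<lambda>k. c k * K ^ k)" using sm[OF K1] by (simp add: c_def)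
  have D: "DERIV (\<lambda>x. \<Sum>k. c k * x ^ k) x0 :> (\<Sum>k. diffs c k * x0 ^ k)"
    by (rule termdiffs_strong[OF smK K2])
  define g where "g k = (real k ^ Suc p * a k) * x0 ^ k" for k
  have sg: "summable g" unfolding g_def using sm[of x0 "Suc p"] d by simp
  have gS: "g (Suc k) = x0 * (diffs c k * x0 ^ k)" for k
    by (simp add: g_def diffs_def c_def)
  have "x0 * (\<Sum>k. diffs c k * x0 ^ k) = (\<Sum>k. g k)"
  proof (cases "x0 = 0")
    case True
    have "g = (\<lambda>k. 0)" by (auto simp: g_def True fun_eq_iff zero_power)
    then show ?thesis using True by simp
  next
    case False
    have "summable (\<lambda>k. g (Suc k))" using sg summable_Suc_iff by blast
    then have "summable (\<lambda>k. x0 * (diffs c k * x0 ^ k))" by (simp add: gS)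
    then have s2: "summable (\<lambda>k. diffs c k * x0 ^ k)" using False by simp
    have "(\<Sum>k. g k) = (\<Sum>k. g (Suc k)) + g 0" using suminf_split_head[OF sg] by simp
    also have "\<dots> = (\<Sum>k. x0 * (diffs c k * x0 ^ k))"
    proof -
      have g0: "g 0 = 0" by (simp add: g_def)
      show ?thesis by (simp only: gS g0 add_0_right)
    qed
    also have "\<dots> = x0 * (\<Sum>k. diffs c k * x0 ^ k)" by (rule suminf_mult[OF s2])
    finally show ?thesis by simp
  qed
  then show ?thesis using D DERIV_imp_deriv[OF D]
    by (auto simp: c_def g_def real_differentiable_def)
qed

lemma ball_line1:
  fixes e :: "real \<times> real"
  assumes "open U" "e \<in> U"
  obtains d where "d > 0" "\<And>x. \<bar>x - fst e\<bar> < d \<Longrightarrow> (x, snd e) \<in> U"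
    "\<And>y. \<bar>y - snd e\<bar> < d \<Longrightarrow> (fst e, y) \<in> U"
proof -
  obtain r where r: "r > 0" "ball e r \<subseteq> U" using assms open_contains_ball by blast
  have "(x, snd e) \<in> U" if "\<bar>x - fst e\<bar> < r" for x
  proof -
    have "dist (x, snd e) e < r" using that by (cases e) (simp add: dist_Pair_Pair dist_real_def)
    then show ?thesis using r by (auto simp: dist_commute)
  qed
  moreover have "(fst e, y) \<in> U" if "\<bar>y - snd e\<bar> < r" for y
  proof -
    have "dist (fst e, y) e < r" using that by (cases e) (simp add: dist_Pair_Pair dist_real_def)
    then show ?thesis using r by (auto simp: dist_commute)
  qed
  ultimately show ?thesis using that r by blast
qed

lemma moment_theta:
  fixes eta0 :: "real \<times> real"
  assumes U_open: "open U" and eta0_in: "eta0 \<in> U"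
    and conv1: "\<forall>eta\<in>U. \<forall>n. summable (\<lambda>k. real k ^ n * hweight bs1 cs (fst eta) k)"
    and conv2: "\<forall>eta\<in>U. \<forall>n. summable (\<lambda>k. real k ^ n * hweight bs2 cs (snd eta) k)"
  shows "okf (\<lambda>e. moment bs1 bs2 cs e n m) eta0
    \<and> theta (\<lambda>e. moment bs1 bs2 cs e n m) eta0 = moment bs1 bs2 cs eta0 (Suc n) m"
proof -
  obtain d where d: "d > 0" "\<And>x. \<bar>x - fst eta0\<bar> < d \<Longrightarrow> (x, snd eta0) \<in> U"
    "\<And>y. \<bar>y - snd eta0\<bar> < d \<Longrightarrow> (fst eta0, y) \<in> U"
    using ball_line1[OF U_open eta0_in] by blast
  define p where "p = n + m div 2"
  show ?thesis
  proof (cases "even m")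
    case True
    have sm: "summable (\<lambda>k. (real k ^ q * hc bs1 cs k) * x ^ k)" if "\<bar>x - fst eta0\<bar> < d" for x q
    proof -
      have "summable (\<lambda>k. real k ^ q * hweight bs1 cs x k)" using bspec[OF conv1 d(2)[OF that]] by simp
      then show ?thesis by (simp add: hweight_hc)
    qed
    have f1: "(\<lambda>x. moment bs1 bs2 cs (x, snd eta0) n m) = (\<lambda>x. \<Sum>k. (real k ^ p * hc bs1 cs k) * x ^ k)"
      using True by (simp add: moment_def hweight_hc p_def)
    have f2: "(\<lambda>y. moment bs1 bs2 cs (fst eta0, y) n m) = (\<lambda>y. moment bs1 bs2 cs eta0 n m)"
      using True by (simp add: moment_def)
    have P: "(\<lambda>x. \<Sum>k. (real k ^ p * hc bs1 cs k) * x ^ k) differentiable at (fst eta0)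
     \<and> fst eta0 * deriv (\<lambda>x. \<Sum>k. (real k ^ p * hc bs1 cs k) * x ^ k) (fst eta0)
        = (\<Sum>k. (real k ^ Suc p * hc bs1 cs k) * fst eta0 ^ k)"
      by (rule ps_theta[OF d(1) sm])
    have "moment bs1 bs2 cs eta0 (Suc n) m = (\<Sum>k. real k ^ Suc p * hweight bs1 cs (fst eta0) k)"
      using True by (simp add: moment_def p_def)
    also have "\<dots> = (\<Sum>k. (real k ^ Suc p * hc bs1 cs k) * fst eta0 ^ k)"
      by (simp only: hweight_hc)
    finally have "moment bs1 bs2 cs eta0 (Suc n) m = (\<Sum>k. (real k ^ Suc p * hc bs1 cs k) * fst eta0 ^ k)" .
    then show ?thesis using P unfolding okf_def theta_def f1 f2 by (simp add: deriv_const_r)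
  next
    case False
    have sm: "summable (\<lambda>k. (real k ^ q * hc bs2 cs k) * y ^ k)" if "\<bar>y - snd eta0\<bar> < d" for y q
    proof -
      have "summable (\<lambda>k. real k ^ q * hweight bs2 cs y k)" using bspec[OF conv2 d(3)[OF that]] by simp
      then show ?thesis by (simp add: hweight_hc)
    qed
    have f2: "(\<lambda>y. moment bs1 bs2 cs (fst eta0, y) n m) = (\<lambda>y. \<Sum>k. (real k ^ p * hc bs2 cs k) * y ^ k)"
      using False by (simp add: moment_def hweight_hc p_def)
    have f1: "(\<lambda>x. moment bs1 bs2 cs (x, snd eta0) n m) = (\<lambda>x. moment bs1 bs2 cs eta0 n m)"
      using False by (simp add: moment_def)
    have P: "(\<lambda>y. \<Sum>k. (real k ^ p * hc bs2 cs k) * y ^ k) differentiable at (snd eta0)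
     \<and> snd eta0 * deriv (\<lambda>y. \<Sum>k. (real k ^ p * hc bs2 cs k) * y ^ k) (snd eta0)
        = (\<Sum>k. (real k ^ Suc p * hc bs2 cs k) * snd eta0 ^ k)"
      by (rule ps_theta[OF d(1) sm])
    have "moment bs1 bs2 cs eta0 (Suc n) m = (\<Sum>k. real k ^ Suc p * hweight bs2 cs (snd eta0) k)"
      using False by (simp add: moment_def p_def)
    also have "\<dots> = (\<Sum>k. (real k ^ Suc p * hc bs2 cs k) * snd eta0 ^ k)"
      by (simp only: hweight_hc)
    finally have "moment bs1 bs2 cs eta0 (Suc n) m = (\<Sum>k. (real k ^ Suc p * hc bs2 cs k) * snd eta0 ^ k)" .
    then show ?thesis using P unfolding okf_def theta_def f1 f2 by (simp add: deriv_const_r)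
  qed
qed

lemma moment_shift: "moment bs1 bs2 cs e (Suc n) m = moment bs1 bs2 cs e n (Suc (Suc m))"
  by (simp add: moment_def)

lemma det_mat_expand:
  "det (mat k k g) = (\<Sum>p | p permutes {0..<k}. of_int (sign p) * (\<Prod>i = 0..<k. g (i, p i)))"
proof -
  have "det (mat k k g) = (\<Sum>p | p permutes {0..<k}. of_int (sign p) * (\<Prod>i = 0..<k. mat k k g $$ (i, p i)))"
    by (simp add: det_def)
  also have "\<dots> = (\<Sum>p | p permutes {0..<k}. of_int (sign p) * (\<Prod>i = 0..<k. g (i, p i)))"
  proof (intro sum.cong refl arg_cong2[where f="(*)"] prod.cong)
    fix p i assume p: "p \<in> {p. p permutes {0..<k}}" and i: "i \<in> {0..<k}"
    then have "p i < k" using permutes_in_image[of p "{0..<k}" i] by auto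
    then show "mat k k g $$ (i, p i) = g (i, p i)" using i by simp
  qed
  finally show ?thesis .
qed

lemma okf_det:
  assumes "\<And>i j. okf (\<lambda>e. F e i j) e0"
  shows "okf (\<lambda>e. det (mat k k (\<lambda>(i,j). F e i j))) e0"
proof -
  have "okf (\<lambda>e. \<Sum>p | p permutes {0..<k}. of_int (sign p) * (\<Prod>i = 0..<k. F e i (p i))) e0"
    by (intro okf_sum okf_mult okf_prod okf_const assms finite_permutations) auto
  then show ?thesis by (simp add: det_mat_expand)
qed

lemma mat_delete_lead:
  "mat_delete (lead_block A n) j m =
    mat (n - 1) (n - 1) (\<lambda>(a,b). A (if a < j then a else Suc a) (if b < m then b else Suc b))"
  by (rule eq_matI) (auto simp: mat_delete_def lead_block_def)

lemma okf_cofactor: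
  assumes "\<And>i j. okf (\<lambda>e. M e i j) e0"
  shows "okf (\<lambda>e. cofactor (lead_block (M e) n) j m) e0"
proof -
  have "okf (\<lambda>e. (- 1) ^ (j + m) * det (mat (n - 1) (n - 1)
     (\<lambda>(a,b). M e (if a < j then a else Suc a) (if b < m then b else Suc b)))) e0"
    by (intro okf_mult okf_const okf_det[of "\<lambda>e a b. M e (if a < j then a else Suc a) (if b < m then b else Suc b)"] assms)
  then show ?thesis by (simp add: cofactor_def mat_delete_lead)
qed

lemma okf_detlead:
  assumes "\<And>i j. okf (\<lambda>e. M e i j) e0"
  shows "okf (\<lambda>e. det (lead_block (M e) n)) e0"
  unfolding lead_block_def by (rule okf_det[OF assms])

lemma S_row_formula:
  assumes lu: "lower_unitri S" and up: "\<And>m. m < n \<Longrightarrow> mmul S M n m = 0" and j: "j < n"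
  shows "S n j * det (lead_block M n) = (\<Sum>m<n. (- M n m) * adj_mat (lead_block M n) $$ (m, j))"
proof -
  let ?A = "lead_block M n"
  let ?B = "adj_mat ?A"
  have Ac: "?A \<in> carrier_mat n n" by (simp add: lead_block_def)
  have Bc: "?B \<in> carrier_mat n n" using adj_mat(1)[OF Ac] .
  have row: "(\<Sum>k<n. S n k * M k m) = - M n m" if "m < n" for m
    using up[OF that] mmul_lower_row[OF lu, of M n m] by simp
  have AA: "(\<Sum>m<n. M k m * ?B $$ (m, j)) = (if k = j then det ?A else 0)" if k: "k < n" for k
  proof -
    have "(?A * ?B) $$ (k, j) = (det ?A \<cdot>\<^sub>m 1\<^sub>m n) $$ (k, j)" using adj_mat(2)[OF Ac] by simp
    then have 1: "(?A * ?B) $$ (k, j) = (if k = j then det ?A else 0)" using k j by simp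
    have "(?A * ?B) $$ (k, j) = row ?A k \<bullet> col ?B j" using k j Bc Ac by simp
    also have "\<dots> = (\<Sum>m\<in>{0..<n}. row ?A k $ m * col ?B j $ m)" using Bc by (simp add: scalar_prod_def)
    also have "\<dots> = (\<Sum>m\<in>{0..<n}. M k m * ?B $$ (m, j))"
    proof (intro sum.cong refl)
      fix m assume "m \<in> {0..<n}"
      then show "row ?A k $ m * col ?B j $ m = M k m * ?B $$ (m, j)"
        using k j Bc by (simp add: lead_block_def)
    qed
    finally show ?thesis using 1 by (simp add: lessThan_atLeast0)
  qed
  have "(\<Sum>m<n. (- M n m) * ?B $$ (m, j)) = (\<Sum>m<n. (\<Sum>k<n. S n k * M k m) * ?B $$ (m, j))"
    using row by simp
  also have "\<dots> = (\<Sum>m<n. \<Sum>k<n. S n k * (M k m * ?B $$ (m, j)))"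
    by (simp add: sum_distrib_right mult.assoc)
  also have "\<dots> = (\<Sum>k<n. \<Sum>m<n. S n k * (M k m * ?B $$ (m, j)))"
    by (rule sum.swap)
  also have "\<dots> = (\<Sum>k<n. S n k * (\<Sum>m<n. M k m * ?B $$ (m, j)))"
    by (simp add: sum_distrib_left)
  also have "\<dots> = (\<Sum>k<n. S n k * (if k = j then det ?A else 0))"
    using AA by (intro sum.cong) auto
  also have "\<dots> = S n j * det ?A" using j by (simp add: if_distrib cong: if_cong)
  finally show ?thesis by simp
qed

lemma divgen: "a * c = b \<Longrightarrow> c \<noteq> 0 \<Longrightarrow> (a::real) = b / c"
  by (simp add: field_simps)

lemma S_okf_lt:
  fixes e0 :: "real \<times> real" and S M :: "real \<times> real \<Rightarrow> imat"
  assumes U: "open U" "e0 \<in> U"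
    and lu: "\<forall>e\<in>U. lower_unitri (S e)"
    and up: "\<forall>e\<in>U. \<forall>n m. m < n \<longrightarrow> mmul (S e) (M e) n m = 0"
    and dt: "\<forall>e\<in>U. \<forall>n. det (lead_block (M e) n) \<noteq> 0"
    and Mok: "\<And>i j. okf (\<lambda>e. M e i j) e0"
    and True: "j < n"
  shows "okf (\<lambda>e. S e n j) e0"
proof -
  define G where "G e = (\<Sum>m<n. (- M e n m) * cofactor (lead_block (M e) n) j m) / det (lead_block (M e) n)" for e
  have eq: "S e n j = G e" if e: "e \<in> U" for e
  proof -
    have lue: "lower_unitri (S e)" using lu e by blast
    have upe: "\<And>m. m < n \<Longrightarrow> mmul (S e) (M e) n m = 0" using up e by blast
    have "S e n j * det (lead_block (M e) n) = (\<Sum>m<n. (- M e n m) * adj_mat (lead_block (M e) n) $$ (m, j))"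
      by (rule S_row_formula[OF lue upe True])
    also have "\<dots> = (\<Sum>m<n. (- M e n m) * cofactor (lead_block (M e) n) j m)"
    proof (intro sum.cong refl)
      fix m assume "m \<in> {..<n}"
      then show "(- M e n m) * adj_mat (lead_block (M e) n) $$ (m, j) = (- M e n m) * cofactor (lead_block (M e) n) j m"
        using True by (simp add: adj_mat_def lead_block_def)
    qed
    finally have "S e n j * det (lead_block (M e) n) = (\<Sum>m<n. (- M e n m) * cofactor (lead_block (M e) n) j m)" .
    moreover have "det (lead_block (M e) n) \<noteq> 0" using dt e by blast
    ultimately show ?thesis unfolding G_def by (rule divgen)
  qed
  have o1: "okf (\<lambda>e. \<Sum>m<n. (- M e n m) * cofactor (lead_block (M e) n) j m) e0"
  proof (rule okf_sum)
    fix m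
    show "okf (\<lambda>e. (- M e n m) * cofactor (lead_block (M e) n) j m) e0"
      by (rule okf_mult[OF okf_uminus[OF Mok] okf_cofactor[OF Mok]])
  qed simp
  have "det (lead_block (M e0) n) \<noteq> 0" using dt U by blast
  then have o2: "okf (\<lambda>e. (\<Sum>m<n. (- M e n m) * cofactor (lead_block (M e) n) j m) / det (lead_block (M e) n)) e0"
    by (rule okf_divide[OF o1 okf_detlead[OF Mok]])
  have Geq: "G = (\<lambda>e. (\<Sum>m<n. (- M e n m) * cofactor (lead_block (M e) n) j m) / det (lead_block (M e) n))"
    by (rule ext) (simp only: G_def)
  have "okf G e0" using o2 by (simp only: Geq)
  moreover have "theta (\<lambda>e. S e n j) e0 = theta G e0 \<and> (okf (\<lambda>e. S e n j) e0 \<longleftrightarrow> okf G e0)"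
    by (rule theta_cong[OF U]) (rule eq)
  ultimately show ?thesis by blast
qed

lemma S_okf:
  fixes e0 :: "real \<times> real" and S M :: "real \<times> real \<Rightarrow> imat"
  assumes U: "open U" "e0 \<in> U"
    and lu: "\<forall>e\<in>U. lower_unitri (S e)"
    and up: "\<forall>e\<in>U. \<forall>n m. m < n \<longrightarrow> mmul (S e) (M e) n m = 0"
    and dt: "\<forall>e\<in>U. \<forall>n. det (lead_block (M e) n) \<noteq> 0"
    and Mok: "\<And>i j. okf (\<lambda>e. M e i j) e0"
  shows "okf (\<lambda>e. S e n j) e0"
proof (cases "j < n")
  case True
  then show ?thesis by (rule S_okf_lt[OF U lu up dt Mok])
next
  case False
  have c: "S e n j = (if j = n then 1 else 0)" if "e \<in> U" for e
    using lu that False unfolding lower_unitri_def by auto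
  show ?thesis by (rule theta_constU(2)[OF U]) (rule c)
qed

lemma lvc_okf:
  fixes e0 :: "real \<times> real" and S :: "real \<times> real \<Rightarrow> imat"
  assumes Sok: "\<And>i j. okf (\<lambda>e. S e i j) e0"
  shows "okf (\<lambda>e. lvc (S e) j i) e0"
proof (induction i rule: less_induct)
  case (less i)
  consider "i < j" | "i = j" | "i > j" by linarith
  then show ?case
  proof cases
    case 1 then show ?thesis by (simp add: lvc.simps[of _ j i])
  next
    case 2 then show ?thesis by (simp add: lvc.simps[of _ j j])
  next
    case 3
    have "okf (\<lambda>e. - (\<Sum>k\<in>{..<i}. S e i k * lvc (S e) j k)) e0"
      by (intro okf_uminus okf_sum okf_mult Sok less) auto
    then show ?thesis using 3 by (simp add: lvc.simps[of _ j i])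
  qed
qed

lemma L_okf:
  fixes e0 :: "real \<times> real" and S :: "real \<times> real \<Rightarrow> imat"
  assumes U: "open U" "e0 \<in> U" and lu: "\<forall>e\<in>U. lower_unitri (S e)"
    and Sok: "\<And>i j. okf (\<lambda>e. S e i j) e0"
  shows "okf (\<lambda>e. linv (S e) i j) e0"
proof -
  have eq: "linv (S e) i j = lvc (S e) j i" if "e \<in> U" for e
    using linv_eq lu that by (simp add: lv_def)
  have "theta (\<lambda>e. linv (S e) i j) e0 = theta (\<lambda>e. lvc (S e) j i) e0 \<and>
      (okf (\<lambda>e. linv (S e) i j) e0 \<longleftrightarrow> okf (\<lambda>e. lvc (S e) j i) e0)"
    by (rule theta_cong[OF U]) (rule eq)
  then show ?thesis using lvc_okf[of S e0 j i, OF Sok] by blast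
qed

lemma thetaM_rowb:
  fixes e0 :: "real \<times> real"
  assumes U: "open U" "e0 \<in> U" and rb: "\<forall>e\<in>U. rowb (A e) N"
  shows "rowb (thetaM A e0) N"
  unfolding rowb_def thetaM_def
proof (intro allI impI)
  fix i k assume "N i \<le> k"
  then have "A e i k = 0" if "e \<in> U" for e using rb that unfolding rowb_def by blast
  then show "theta (\<lambda>e. A e i k) e0 = 0" by (rule theta_constU(1)[OF U])
qed

lemma thetaM_mmul:
  fixes e0 :: "real \<times> real" and A B :: "real \<times> real \<Rightarrow> imat"
  assumes U: "open U" "e0 \<in> U" and rb: "\<forall>e\<in>U. rowb (A e) N"
    and Aok: "\<And>i j. okf (\<lambda>e. A e i j) e0" and Bok: "\<And>i j. okf (\<lambda>e. B e i j) e0"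
  shows "thetaM (\<lambda>e. mmul (A e) (B e)) e0 i j
          = mmul (thetaM A e0) (B e0) i j + mmul (A e0) (thetaM B e0) i j"
    and "okf (\<lambda>e. mmul (A e) (B e) i j) e0"
proof -
  have eq: "mmul (A e) (B e) i j = (\<Sum>k<N i. A e i k * B e k j)" if "e \<in> U" for e
    using rb that mmul_finb by blast
  have ok: "okf (\<lambda>e. \<Sum>k<N i. A e i k * B e k j) e0"
    by (intro okf_sum okf_mult Aok Bok) auto
  have th: "theta (\<lambda>e. \<Sum>k<N i. A e i k * B e k j) e0
     = (\<Sum>k<N i. theta (\<lambda>e. A e i k) e0 * B e0 k j + A e0 i k * theta (\<lambda>e. B e k j) e0)"
    by (subst theta_sum) (auto intro!: okf_mult Aok Bok sum.cong simp: theta_mult[OF Aok Bok])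
  have rbt: "rowb (thetaM A e0) N" by (rule thetaM_rowb[OF U rb])
  have "rowb (A e0) N" using rb U by blast
  then have "mmul (thetaM A e0) (B e0) i j + mmul (A e0) (thetaM B e0) i j
     = (\<Sum>k<N i. theta (\<lambda>e. A e i k) e0 * B e0 k j + A e0 i k * theta (\<lambda>e. B e k j) e0)"
    using rbt by (simp add: mmul_finb[of _ N] sum.distrib thetaM_def)
  moreover have tc: "theta (\<lambda>e. mmul (A e) (B e) i j) e0 = theta (\<lambda>e. \<Sum>k<N i. A e i k * B e k j) e0 \<and>
     (okf (\<lambda>e. mmul (A e) (B e) i j) e0 \<longleftrightarrow> okf (\<lambda>e. \<Sum>k<N i. A e i k * B e k j) e0)"
    by (rule theta_cong[OF U]) (rule eq)
  ultimately show "thetaM (\<lambda>e. mmul (A e) (B e)) e0 i j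
          = mmul (thetaM A e0) (B e0) i j + mmul (A e0) (thetaM B e0) i j"
    using th unfolding thetaM_def by simp
  show "okf (\<lambda>e. mmul (A e) (B e) i j) e0"
    using tc ok by blast
qed

lemma lead_block_mmul:
  assumes "rowb A Suc"
  shows "lead_block (mmul A B) n = lead_block A n * lead_block B n"
proof (rule eq_matI)
  fix i j assume i: "i < dim_row (lead_block A n * lead_block B n)" and j: "j < dim_col (lead_block A n * lead_block B n)"
  then have i': "i < n" and j': "j < n" by (auto simp: lead_block_def)
  have "mmul A B i j = (\<Sum>k<n. A i k * B k j)"
    by (rule mmul_fin) (use assms i' in \<open>auto simp: rowb_def\<close>)
  also have "\<dots> = (lead_block A n * lead_block B n) $$ (i, j)"
    using i' j' by (auto simp: lead_block_def scalar_prod_def lessThan_atLeast0 intro!: sum.cong)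
  finally show "lead_block (mmul A B) n $$ (i, j) = (lead_block A n * lead_block B n) $$ (i, j)"
    using i' j' by (simp add: lead_block_def)
qed (auto simp: lead_block_def)

lemma R_diag_nz:
  assumes lu: "lower_unitri S" and up: "\<forall>n m. m < n \<longrightarrow> mmul S M n m = 0"
    and dt: "det (lead_block M (Suc j)) \<noteq> 0"
  shows "mmul S M j j \<noteq> 0"
proof -
  let ?n = "Suc j"
  have c: "lead_block X ?n \<in> carrier_mat ?n ?n" for X by (simp add: lead_block_def)
  have d1: "det (lead_block S ?n) = 1"
  proof -
    have "det (lead_block S ?n) = prod_list (diag_mat (lead_block S ?n))"
      by (rule det_lower_triangular[OF _ c]) (use lu in \<open>auto simp: lead_block_def lower_unitri_def\<close>)
    also have "\<dots> = 1" using lu by (simp add: prod_list_diag_prod lead_block_def lower_unitri_def)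
    finally show ?thesis .
  qed
  have "det (lead_block (mmul S M) ?n) = det (lead_block S ?n) * det (lead_block M ?n)"
    using lead_block_mmul[OF rowb_lower[OF lu]] det_mult[OF c c] by simp
  then have nz: "det (lead_block (mmul S M) ?n) \<noteq> 0" using d1 dt by simp
  have "det (lead_block (mmul S M) ?n) = prod_list (diag_mat (lead_block (mmul S M) ?n))"
    by (rule det_upper_triangular[OF _ c]) (use up in \<open>auto simp: upper_triangular_def lead_block_def\<close>)
  also have "\<dots> = (\<Prod>k = 0..<?n. mmul S M k k)" by (simp add: prod_list_diag_prod lead_block_def)
  finally have "(\<Prod>k = 0..<?n. mmul S M k k) \<noteq> 0" using nz by simp
  then show ?thesis by simp
qed

lemma band_lemma:
  assumes Rup: "\<And>k j. j < k \<Longrightarrow> R k j = 0" and Rd: "\<And>j. R j j \<noteq> 0"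
    and XR: "\<And>i j. j + c < i \<Longrightarrow> mmul X R i j = 0"
  shows "j + c < i \<Longrightarrow> X i j = 0"
proof (induction j rule: less_induct)
  case (less j)
  have "mmul X R i j = (\<Sum>k<Suc j. X i k * R k j)"
    unfolding mmul_def by (intro suminf_finite) (auto simp: Rup)
  also have "\<dots> = X i j * R j j + (\<Sum>k<j. X i k * R k j)" by simp
  also have "(\<Sum>k<j. X i k * R k j) = 0" using less by (intro sum.neutral) auto
  finally have "X i j * R j j = 0" using XR[OF less.prems] by simp
  then show ?case using Rd by simp
qed

lemma mmul_madd_left:
  assumes "rowfin A" "rowfin B"
  shows "mmul (madd A B) C = madd (mmul A C) (mmul B C)"
proof (intro ext)
  fix i j
  obtain NA NB where a: "rowb A NA" and b: "rowb B NB" using assms rowfin_def by blast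
  let ?N = "max (NA i) (NB i)"
  have h: "\<And>X N'. rowb X N' \<Longrightarrow> N' i \<le> ?N \<Longrightarrow> mmul X C i j = (\<Sum>k<?N. X i k * C k j)"
    by (rule mmul_fin) (auto simp: rowb_def)
  have "mmul (madd A B) C i j = (\<Sum>k<?N. madd A B i k * C k j)"
    by (rule mmul_fin) (use a b in \<open>auto simp: rowb_def madd_def\<close>)
  also have "\<dots> = (\<Sum>k<?N. A i k * C k j) + (\<Sum>k<?N. B i k * C k j)"
    by (simp add: madd_def distrib_right sum.distrib)
  also have "\<dots> = mmul A C i j + mmul B C i j" using h[OF a] h[OF b] by simp
  finally show "mmul (madd A B) C i j = madd (mmul A C) (mmul B C) i j" by (simp add: madd_def)
qed

lemma mmul_madd_right:
  assumes "rowfin A"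
  shows "mmul A (madd B C) = madd (mmul A B) (mmul A C)"
proof (intro ext)
  fix i j
  obtain NA where a: "rowb A NA" using assms rowfin_def by blast
  show "mmul A (madd B C) i j = madd (mmul A B) (mmul A C) i j"
    by (simp add: mmul_finb[OF a] madd_def distrib_left sum.distrib)
qed

lemma mmul_neg_right:
  assumes "rowfin A"
  shows "mmul A (\<lambda>i j. - B i j) = (\<lambda>i j. - mmul A B i j)"
proof (intro ext)
  fix i j
  obtain NA where a: "rowb A NA" using assms rowfin_def by blast
  show "mmul A (\<lambda>i j. - B i j) i j = - mmul A B i j"
    by (simp add: mmul_finb[OF a] sum_negf)
qed

lemma mmul_zero_right[simp]: "mmul A (\<lambda>i j. 0) = (\<lambda>i j. 0)"
  by (simp add: mmul_def)

lemma rowfin_rowb: "rowb A N \<Longrightarrow> rowfin A"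
  unfolding rowfin_def by blast

theorem mainTheorem14:
  fixes bs1 bs2 cs :: "real list"
    and U :: "(real \<times> real) set"
    and S St H :: "real \<times> real \<Rightarrow> imat"
    and eta0 :: "real \<times> real"
  assumes cs_ok: "\<forall>c\<in>set cs. \<forall>n::nat. c \<noteq> - real n"
    and U_open: "open U" and eta0_in: "eta0 \<in> U"
    and conv1: "\<forall>eta\<in>U. \<forall>n. summable (\<lambda>k. real k ^ n * hweight bs1 cs (fst eta) k)"
    and conv2: "\<forall>eta\<in>U. \<forall>n. summable (\<lambda>k. real k ^ n * hweight bs2 cs (snd eta) k)"
    and minors: "\<forall>eta\<in>U. \<forall>n. det (lead_block (moment bs1 bs2 cs eta) n) \<noteq> 0"
    and S_lu: "\<forall>eta\<in>U. lower_unitri (S eta)"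
    and St_lu: "\<forall>eta\<in>U. lower_unitri (St eta)"
    and H_diag: "\<forall>eta\<in>U. diagonal_m (H eta)"
    and GB: "\<forall>eta\<in>U. moment bs1 bs2 cs eta
               = mmul (mmul (linv (S eta)) (H eta)) (mtr (linv (St eta)))"
  defines "T \<equiv> (\<lambda>eta. mmul (mmul (S eta) Lam) (linv (S eta)))"
    and "phi \<equiv> mmul (thetaM S eta0) (linv (S eta0))"
  shows "thetaM T eta0 = comm phi (T eta0)
       \<and> comm phi (T eta0) = comm (Tplus (T eta0)) (T eta0)"
proof -
  note U = U_open eta0_in
  define M where "M = (\<lambda>e. moment bs1 bs2 cs e)"
  define L where "L = (\<lambda>e. linv (S e))"
  define P where "P = (\<lambda>e. mmul (S e) Lam)"
  define S0 where "S0 = S eta0"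
  define L0 where "L0 = L eta0"
  define M0 where "M0 = M eta0"
  define P0 where "P0 = P eta0"
  define dS where "dS = thetaM S eta0"
  define dL where "dL = thetaM L eta0"
  have T0: "T eta0 = mmul P0 L0" by (simp add: T_def P0_def P_def L0_def L_def)
  have phi: "phi = mmul dS L0" by (simp add: phi_def dS_def L0_def L_def)
  have lu0: "lower_unitri S0" using S_lu U S0_def by blast
  have Llu0: "lower_unitri L0" using linv_lower[OF lu0] by (simp add: L0_def L_def S0_def)
  have LS0: "mmul L0 S0 = idm" using linv_left[OF lu0] by (simp add: L0_def L_def S0_def)
  have rS0: "rowfin S0" by (rule rowfin_lower[OF lu0])
  have rL0: "rowfin L0" by (rule rowfin_lower[OF Llu0])
  have rb_S: "\<forall>e\<in>U. rowb (S e) Suc" using S_lu rowb_lower by blast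
  have rdS: "rowb dS Suc" unfolding dS_def by (rule thetaM_rowb[OF U rb_S])
  have rfdS: "rowfin dS" using rdS rowfin_rowb by blast
  have rP0: "rowfin P0" unfolding P0_def P_def S0_def[symmetric] by (rule rowfin_mmul[OF rS0 rowfin_Lam])
  have rphi: "rowfin phi" unfolding phi by (rule rowfin_mmul[OF rfdS rL0])
  have rT0: "rowfin (T eta0)" unfolding T0 by (rule rowfin_mmul[OF rP0 rL0])
  have up: "\<forall>e\<in>U. \<forall>n m. m < n \<longrightarrow> mmul (S e) (M e) n m = 0"
  proof (intro ballI allI impI)
    fix e and n m :: nat assume e: "e \<in> U" and mn: "m < n"
    define V where "V = mtr (linv (St e))"
    have lue: "lower_unitri (S e)" using S_lu e by blast
    have Le: "lower_unitri (L e)" using linv_lower[OF lue] by (simp add: L_def)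
    have rH: "rowb (H e) Suc" using H_diag e unfolding rowb_def diagonal_m_def by auto
    have Me: "M e = mmul (mmul (L e) (H e)) V" using GB e by (simp add: M_def L_def V_def)
    have "mmul (S e) (M e) = mmul (mmul (S e) (mmul (L e) (H e))) V"
      unfolding Me by (rule mmul_assoc[symmetric, OF rowfin_lower[OF lue] rowfin_mmul[OF rowfin_lower[OF Le] rowfin_rowb[OF rH]]])
    also have "mmul (S e) (mmul (L e) (H e)) = mmul (mmul (S e) (L e)) (H e)"
      by (rule mmul_assoc[symmetric, OF rowfin_lower[OF lue] rowfin_lower[OF Le]])
    also have "mmul (S e) (L e) = idm" using linv_right[OF lue] by (simp add: L_def)
    finally have SM: "mmul (S e) (M e) = mmul (H e) V" by simp
    have "mmul (H e) V n m = (\<Sum>k<Suc n. H e n k * V k m)" by (rule mmul_finb[OF rH])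
    also have "\<dots> = H e n n * V n m"
      using H_diag e unfolding diagonal_m_def by (simp add: sum.neutral)
    also have "V n m = 0"
    proof -
      have "lower_unitri (linv (St e))" using linv_lower St_lu e by blast
      then show ?thesis using mn by (simp add: V_def mtr_def lower_unitri_def)
    qed
    finally show "mmul (S e) (M e) n m = 0" using SM by simp
  qed
  have dt: "\<forall>e\<in>U. \<forall>n. det (lead_block (M e) n) \<noteq> 0" using minors by (simp add: M_def)
  have MT: "okf (\<lambda>e. M e i j) eta0 \<and> theta (\<lambda>e. M e i j) eta0 = M0 (Suc i) j" for i j
    using moment_theta[OF U conv1 conv2, of i j] by (simp add: M_def M0_def)
  have Mok: "\<And>i j. okf (\<lambda>e. M e i j) eta0" using MT by blast
  have thM: "thetaM M eta0 = mmul Lam M0"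
    by (intro ext) (simp add: thetaM_def MT Lam_mmul)
  have Sok: "\<And>i j. okf (\<lambda>e. S e i j) eta0" by (rule S_okf[OF U S_lu up dt Mok])
  have Lok: "\<And>i j. okf (\<lambda>e. L e i j) eta0" unfolding L_def by (rule L_okf[OF U S_lu Sok])
  have SdL: "mmul S0 dL = (\<lambda>i j. - mmul dS L0 i j)"
  proof (intro ext)
    fix i j
    have "thetaM (\<lambda>e. mmul (S e) (L e)) eta0 i j = mmul dS L0 i j + mmul S0 dL i j"
      unfolding dS_def L0_def S0_def dL_def by (rule thetaM_mmul(1)[OF U rb_S Sok Lok])
    moreover have "thetaM (\<lambda>e. mmul (S e) (L e)) eta0 i j = 0"
    proof -
      have c: "mmul (S e) (L e) i j = idm i j" if "e \<in> U" for e
        using linv_right S_lu that by (simp add: L_def)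
      show ?thesis unfolding thetaM_def by (rule theta_constU(1)[OF U]) (rule c)
    qed
    ultimately show "mmul S0 dL i j = - mmul dS L0 i j" by simp
  qed
  have dLf: "dL = (\<lambda>i j. - mmul L0 (mmul dS L0) i j)"
  proof -
    have "dL = mmul (mmul L0 S0) dL" using LS0 by simp
    also have "\<dots> = mmul L0 (mmul S0 dL)" by (rule mmul_assoc[OF rL0 rS0])
    also have "\<dots> = (\<lambda>i j. - mmul L0 (mmul dS L0) i j)" unfolding SdL by (rule mmul_neg_right[OF rL0])
    finally show ?thesis .
  qed
  define NP where "NP = (\<lambda>i. \<Sum>k<Suc i. Suc (Suc k))"
  have rbP: "\<forall>e\<in>U. rowb (P e) NP"
    unfolding P_def NP_def using rb_S rowb_mmul[OF _ rowb_Lam] by blast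
  have Pok: "\<And>i j. okf (\<lambda>e. P e i j) eta0"
    unfolding P_def by (rule thetaM_mmul(2)[OF U rb_S Sok okf_const])
  have dP: "thetaM P eta0 = mmul dS Lam"
  proof (intro ext)
    fix i j
    have "thetaM P eta0 i j = mmul dS Lam i j + mmul S0 (thetaM (\<lambda>e. Lam) eta0) i j"
      unfolding P_def dS_def S0_def by (rule thetaM_mmul(1)[OF U rb_S Sok okf_const])
    moreover have "thetaM (\<lambda>e. Lam) eta0 = (\<lambda>i j. 0)" by (simp add: thetaM_def theta_const)
    ultimately show "thetaM P eta0 i j = mmul dS Lam i j" by simp
  qed
  have dT: "thetaM T eta0 i j = mmul (mmul dS Lam) L0 i j + mmul P0 dL i j" for i j
  proof -
    have "T = (\<lambda>e. mmul (P e) (L e))" by (simp add: T_def P_def L_def)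
    then have "thetaM T eta0 i j = thetaM (\<lambda>e. mmul (P e) (L e)) eta0 i j" by simp
    also have "\<dots> = mmul (thetaM P eta0) (L eta0) i j + mmul (P eta0) (thetaM L eta0) i j"
      by (rule thetaM_mmul(1)[OF U rbP Pok Lok])
    finally show ?thesis by (simp add: dP L0_def P0_def dL_def)
  qed
  have A1: "mmul phi (T eta0) = mmul (mmul dS Lam) L0"
  proof -
    have LP: "mmul L0 P0 = Lam"
    proof -
      have "mmul L0 P0 = mmul L0 (mmul S0 Lam)" by (simp add: P0_def P_def S0_def)
      also have "\<dots> = mmul (mmul L0 S0) Lam" by (rule mmul_assoc[symmetric, OF rL0 rS0])
      finally show ?thesis using LS0 by simp
    qed
    have "mmul phi (T eta0) = mmul (mmul dS L0) (mmul P0 L0)" by (simp add: phi T0)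
    also have "\<dots> = mmul dS (mmul L0 (mmul P0 L0))" by (rule mmul_assoc[OF rfdS rL0])
    also have "mmul L0 (mmul P0 L0) = mmul (mmul L0 P0) L0" by (rule mmul_assoc[symmetric, OF rL0 rP0])
    also have "\<dots> = mmul Lam L0" using LP by simp
    also have "mmul dS (mmul Lam L0) = mmul (mmul dS Lam) L0" by (rule mmul_assoc[symmetric, OF rfdS rowfin_Lam])
    finally show ?thesis .
  qed
  have A2: "mmul (T eta0) phi = mmul P0 (mmul L0 (mmul dS L0))"
    unfolding T0 phi by (rule mmul_assoc[OF rP0 rL0])
  have PdL: "mmul P0 dL = (\<lambda>i j. - mmul P0 (mmul L0 (mmul dS L0)) i j)"
    unfolding dLf by (rule mmul_neg_right[OF rP0])
  have G1: "thetaM T eta0 = comm phi (T eta0)"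
  proof (intro ext)
    fix i j
    show "thetaM T eta0 i j = comm phi (T eta0) i j"
      unfolding comm_def msub_def dT A1 A2 PdL by simp
  qed
  define R0 where "R0 = mmul S0 M0"
  have up0: "\<forall>n m. m < n \<longrightarrow> mmul S0 M0 n m = 0" using up U by (simp add: S0_def M0_def)
  have Rup: "\<And>k j. j < k \<Longrightarrow> R0 k j = 0" using up0 by (simp add: R0_def)
  have Rd: "\<And>j. R0 j j \<noteq> 0"
  proof -
    fix j
    have "det (lead_block M0 (Suc j)) \<noteq> 0" using dt U by (simp add: M0_def)
    then show "R0 j j \<noteq> 0" unfolding R0_def by (rule R_diag_nz[OF lu0 up0])
  qed
  have dSM: "mmul dS M0 n m + mmul S0 (mmul Lam M0) n m = 0" if mn: "m < n" for n m
  proof -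
    have "thetaM (\<lambda>e. mmul (S e) (M e)) eta0 n m = mmul dS M0 n m + mmul S0 (thetaM M eta0) n m"
      unfolding dS_def M0_def S0_def by (rule thetaM_mmul(1)[OF U rb_S Sok Mok])
    moreover have "thetaM (\<lambda>e. mmul (S e) (M e)) eta0 n m = 0"
    proof -
      have c: "mmul (S e) (M e) n m = 0" if "e \<in> U" for e
        using up that mn by blast
      show ?thesis unfolding thetaM_def by (rule theta_constU(1)[OF U]) (rule c)
    qed
    ultimately show ?thesis using thM by simp
  qed
  have phiR: "mmul phi R0 = mmul dS M0"
  proof -
    have "mmul phi R0 = mmul dS (mmul L0 (mmul S0 M0))" unfolding phi R0_def by (rule mmul_assoc[OF rfdS rL0])
    also have "mmul L0 (mmul S0 M0) = mmul (mmul L0 S0) M0" by (rule mmul_assoc[symmetric, OF rL0 rS0])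
    finally show ?thesis using LS0 by simp
  qed
  have TR: "mmul (T eta0) R0 = mmul S0 (mmul Lam M0)"
  proof -
    have "mmul (T eta0) R0 = mmul P0 (mmul L0 (mmul S0 M0))" unfolding T0 R0_def by (rule mmul_assoc[OF rP0 rL0])
    also have "mmul L0 (mmul S0 M0) = mmul (mmul L0 S0) M0" by (rule mmul_assoc[symmetric, OF rL0 rS0])
    also have "\<dots> = M0" using LS0 by simp
    also have "mmul P0 M0 = mmul (mmul S0 Lam) M0" by (simp add: P0_def P_def S0_def)
    also have "\<dots> = mmul S0 (mmul Lam M0)" by (rule mmul_assoc[OF rS0 rowfin_Lam])
    finally show ?thesis .
  qed
  have LamM: "mmul Lam M0 = (\<lambda>k j. M0 k (Suc (Suc j)))"
    by (intro ext) (simp add: Lam_mmul M0_def M_def moment_shift)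
  have TRf: "mmul (T eta0) R0 i j = R0 i (Suc (Suc j))" for i j
  proof -
    have "mmul (T eta0) R0 i j = mmul S0 (\<lambda>k j. M0 k (Suc (Suc j))) i j" using TR LamM by simp
    also have "\<dots> = R0 i (Suc (Suc j))" by (simp add: R0_def mmul_def)
    finally show ?thesis .
  qed
  define X where "X = madd phi (T eta0)"
  have XR: "mmul X R0 = madd (mmul phi R0) (mmul (T eta0) R0)"
    unfolding X_def by (rule mmul_madd_left[OF rphi rT0])
  have Xz: "X i j = 0" if "j + 0 < i" for i j
  proof (rule band_lemma[of R0 0 X, OF Rup Rd _ that])
    fix i j :: nat assume ji: "j + 0 < i"
    have "mmul X R0 i j = mmul dS M0 i j + mmul S0 (mmul Lam M0) i j"
      by (simp add: XR madd_def phiR TR)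
    then show "mmul X R0 i j = 0" using dSM[of j i] ji by simp
  qed
  have Tz: "T eta0 i j = 0" if "j + 2 < i" for i j
  proof (rule band_lemma[of R0 2 "T eta0", OF Rup Rd _ that])
    fix i j :: nat assume ji: "j + 2 < i"
    show "mmul (T eta0) R0 i j = 0" using TRf Rup ji by simp
  qed
  have phiz: "phi i j = 0" if "i \<le> j" for i j
  proof -
    have "phi i j = (\<Sum>k<Suc i. dS i k * L0 k j)" unfolding phi by (rule mmul_finb[OF rdS])
    also have "\<dots> = 0"
    proof (intro sum.neutral ballI)
      fix k assume k: "k \<in> {..<Suc i}"
      show "dS i k * L0 k j = 0"
      proof (cases "k = i")
        case True
        have c: "S e i i = 1" if "e \<in> U" for e using S_lu that unfolding lower_unitri_def by blast
        have "dS i i = 0" unfolding dS_def thetaM_def by (rule theta_constU(1)[OF U]) (rule c)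
        then show ?thesis using True by simp
      next
        case False
        then have "k < j" using k that by auto
        then have "L0 k j = 0" using Llu0 unfolding lower_unitri_def by blast
        then show ?thesis by simp
      qed
    qed
    finally show ?thesis .
  qed
  have phiT: "phi = (\<lambda>i j. - Tminus (T eta0) i j)"
  proof (intro ext)
    fix i j
    show "phi i j = - Tminus (T eta0) i j"
    proof (cases "i \<le> j")
      case True
      then show ?thesis using phiz by (simp add: Tminus_def)
    next
      case False
      then have "X i j = 0" using Xz by simp
      then have p: "phi i j = - T eta0 i j" by (simp add: X_def madd_def)
      show ?thesis
      proof (cases "i = Suc j \<or> i = Suc (Suc j)")
        case True
        then show ?thesis using p by (simp add: Tminus_def)
      next
        case False2: False
        then have "j + 2 < i" using False by auto
        then have "T eta0 i j = 0" by (rule Tz)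
        then show ?thesis using p False2 by (simp add: Tminus_def)
      qed
    qed
  qed
  have Tp: "Tplus (T eta0) = madd phi (T eta0)"
    by (intro ext) (simp add: Tplus_def msub_def madd_def phiT)
  have G2: "comm phi (T eta0) = comm (Tplus (T eta0)) (T eta0)"
  proof -
    have "mmul (madd phi (T eta0)) (T eta0) = madd (mmul phi (T eta0)) (mmul (T eta0) (T eta0))"
      by (rule mmul_madd_left[OF rphi rT0])
    moreover have "mmul (T eta0) (madd phi (T eta0)) = madd (mmul (T eta0) phi) (mmul (T eta0) (T eta0))"
      by (rule mmul_madd_right[OF rT0])
    ultimately show ?thesis unfolding Tp comm_def by (intro ext) (simp add: msub_def madd_def)
  qed
  show ?thesis using G1 G2 by blast
qed

end
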